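(* Consider the two-class stochastic Leslie model with matrices $\boldsymbol A_\eta=\begin{pmatrix} f_\eta & F_\eta\\ s_\eta & 0\end{pmatrix}$, $\eta\in\mathcal I$, with $f_\eta,F_\eta,s_\eta\in[\alpha,\beta]$ for constants $0<\alpha\le\beta$, in the standing setting. Let $\bar{\boldsymbol A}=\sum_\eta\pi_\eta\boldsymbol A_\eta$ and let $C_{II}=\log\rho(\bar{\boldsymbol A})+\sum_\eta\pi_\eta\log(1+W^M_\eta)$, where $W^M_\eta$ is computed as in the perturbation construction with $\boldsymbol B=\bar{\boldsymbol A}$. Then $\log\lambda_S\le C_{II}$ and $C_{II}\ge\log\rho(\bar{\boldsymbol A})$.
   Context: Standing setting: $\mathcal I$ is a finite or countable set of environmental states; $(\tau_t)$ is a homogeneous Markov chain on $\mathcal I$ with unique stationary distribution $\boldsymbol\pi$ to which its transition probabilities converge geometrically; the model is $\boldsymbol z(t+1)=\boldsymbol A_{\tau_{t+1}}\boldsymbol z(t)$ with $\boldsymbol z(0)\ge0$ nonzero; the SGR $\lambda_S$ is defined by $\log\lambda_S=\lim_t\frac1t\log\|\boldsymbol z(t)\|_1$ almost surely. For a fixed nonnegative matrix $\boldsymbol B$ with the same zero pattern as each $\boldsymbol A_\eta$: $W^{ij}_\eta=(A^{ij}_\eta-B^{ij})/B^{ij}$ if $B^{ij}\neq0$, $W^{ij}_\eta=0$ if $B^{ij}=0$, and $W^M_\eta=\max_{i,j}W^{ij}_\eta$. $\rho$ is spectral radius. *)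

theory Defs
  imports "HOL-Probability.Probability"
begin

definition complexify :: "real^'n^'n \<Rightarrow> complex^'n^'n" where
  "complexify A = (\<chi> i j. complex_of_real (A $ i $ j))"

definition spectral_radius :: "real^'n^'n \<Rightarrow> real" where
  "spectral_radius A = Max (cmod ` {c :: complex. det (mat c - complexify A) = 0})"

definition Wpert :: "real^'n^'n \<Rightarrow> real^'n^'n \<Rightarrow> 'n \<Rightarrow> 'n \<Rightarrow> real" where
  "Wpert A B i j = (if B $ i $ j \<noteq> 0 then (A $ i $ j - B $ i $ j) / B $ i $ j else 0)"

definition WM :: "real^'n^'n \<Rightarrow> real^'n^'n \<Rightarrow> real" where
  "WM A B = Max (range (\<lambda>(i, j). Wpert A B i j))"

definition norm1 :: "real^'n \<Rightarrow> real" where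
  "norm1 x = (\<Sum>i\<in>UNIV. \<bar>x $ i\<bar>)"

definition leslie2 :: "real \<Rightarrow> real \<Rightarrow> real \<Rightarrow> real^2^2" where
  "leslie2 f F s = vector [vector [f, F], vector [s, 0]]"

definition stochastic_matrix :: "'i set \<Rightarrow> ('i \<Rightarrow> 'i \<Rightarrow> real) \<Rightarrow> bool" where
  "stochastic_matrix I P \<longleftrightarrow>
     (\<forall>i\<in>I. \<forall>j\<in>I. P i j \<ge> 0) \<and> (\<forall>i\<in>I. ((\<lambda>j. P i j) has_sum 1) I)"

fun nstep :: "'i set \<Rightarrow> ('i \<Rightarrow> 'i \<Rightarrow> real) \<Rightarrow> nat \<Rightarrow> 'i \<Rightarrow> 'i \<Rightarrow> real" where
  "nstep I P 0 i j = (if i = j then 1 else 0)"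
| "nstep I P (Suc n) i j = (\<Sum>\<^sub>\<infinity>k\<in>I. nstep I P n i k * P k j)"

definition stationary_distribution :: "'i set \<Rightarrow> ('i \<Rightarrow> 'i \<Rightarrow> real) \<Rightarrow> ('i \<Rightarrow> real) \<Rightarrow> bool" where
  "stationary_distribution I P p \<longleftrightarrow>
     (\<forall>j\<in>I. p j \<ge> 0) \<and> (p has_sum 1) I \<and>
     (\<forall>j\<in>I. ((\<lambda>i. p i * P i j) has_sum p j) I)"

definition standing_markov ::
  "'a measure \<Rightarrow> 'i set \<Rightarrow> ('i \<Rightarrow> 'i \<Rightarrow> real) \<Rightarrow> ('i \<Rightarrow> real) \<Rightarrow> (nat \<Rightarrow> 'a \<Rightarrow> 'i) \<Rightarrow> bool" where
  "standing_markov M I P pst tau \<longleftrightarrow>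
     prob_space M \<and> countable I \<and> stochastic_matrix I P \<and>
     stationary_distribution I P pst \<and>
     (\<forall>q. stationary_distribution I P q \<longrightarrow> (\<forall>j\<in>I. q j = pst j)) \<and>
     (\<exists>C r. 0 \<le> r \<and> r < 1 \<and>
        (\<forall>n. \<forall>i\<in>I. \<forall>j\<in>I. \<bar>nstep I P n i j - pst j\<bar> \<le> C * r ^ n)) \<and>
     (\<forall>t. tau t \<in> measurable M (count_space UNIV)) \<and>
     (\<forall>t. \<forall>\<omega>\<in>space M. tau t \<omega> \<in> I) \<and>
     (\<exists>mu0. \<forall>n (is :: nat \<Rightarrow> 'i). (\<forall>k\<le>n. is k \<in> I) \<longrightarrow>
        measure M {\<omega>\<in>space M. \<forall>k\<le>n. tau k \<omega> = is k}
          = mu0 (is 0) * (\<Prod>k<n. P (is k) (is (Suc k))))"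

primrec zproc :: "('i \<Rightarrow> real^'n^'n) \<Rightarrow> (nat \<Rightarrow> 'a \<Rightarrow> 'i) \<Rightarrow> real^'n \<Rightarrow> nat \<Rightarrow> 'a \<Rightarrow> real^'n" where
  "zproc A tau z0 0 \<omega> = z0"
| "zproc A tau z0 (Suc t) \<omega> = A (tau (Suc t) \<omega>) *v zproc A tau z0 t \<omega>"

end

theory Submission
  imports Defs
begin


lemma prob_has_sum_UN:
  assumes P: "prob_space M" and S: "countable S" and A: "\<And>x. x\<in>S \<Longrightarrow> A x \<in> sets M"
    and D: "disjoint_family_on A S"
  shows "((\<lambda>x. measure M (A x)) has_sum measure M (\<Union>x\<in>S. A x)) S"
proof -
  interpret prob_space M by fact
  have e: "emeasure M (\<Union>(A ` S)) = (\<integral>\<^sup>+i. emeasure M (A i) \<partial>count_space S)"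
    by (rule emeasure_UN_countable[OF A S D])
  have e2: "(\<integral>\<^sup>+i. ennreal (measure M (A i)) \<partial>count_space S) = ennreal (measure M (\<Union>(A ` S)))"
    using e by (simp add: emeasure_eq_measure nn_integral_count_space_indicator)
  have int: "integrable (count_space S) (\<lambda>x. measure M (A x))"
    by (rule integrableI_nonneg) (use e2 in auto)
  have abs: "Infinite_Set_Sum.abs_summable_on (\<lambda>x. measure M (A x)) S"
    using int by (simp add: abs_summable_on_def)
  have "infsetsum (\<lambda>x. measure M (A x)) S = measure M (\<Union>(A ` S))"
    using e2 by (subst infsetsum_conv_nn_integral) auto
  moreover have "infsetsum (\<lambda>x. measure M (A x)) S = infsum (\<lambda>x. measure M (A x)) S"
    by (rule infsetsum_infsum[OF abs])
  moreover have "(\<lambda>x. measure M (A x)) summable_on S"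
    using abs abs_summable_equivalent abs_summable_summable by blast
  ultimately show ?thesis
    by (metis has_sum_infsum)
qed


locale mk =
  fixes M :: "'a measure" and I :: "'i set" and P :: "'i \<Rightarrow> 'i \<Rightarrow> real"
    and tau :: "nat \<Rightarrow> 'a \<Rightarrow> 'i" and mu0 :: "'i \<Rightarrow> real"
  assumes prob: "prob_space M" and cI: "countable I"
    and meas: "\<And>t. tau t \<in> measurable M (count_space UNIV)"
    and rng: "\<And>t \<omega>. \<omega> \<in> space M \<Longrightarrow> tau t \<omega> \<in> I"
    and cyl: "\<And>n (is :: nat \<Rightarrow> 'i). (\<forall>k\<le>n. is k \<in> I) \<Longrightarrow>
        measure M {\<omega>\<in>space M. \<forall>k\<le>n. tau k \<omega> = is k}
          = mu0 (is 0) * (\<Prod>k<n. P (is k) (is (Suc k)))"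
begin

interpretation prob_space M by (rule prob)

lemmas [measurable] = meas

definition cy :: "'i list \<Rightarrow> 'a set" where
  "cy p = {\<omega>\<in>space M. \<forall>k<length p. tau k \<omega> = p!k}"

lemma cy_sets: "cy p \<in> sets M"
  unfolding cy_def by measurable

lemma cy_meas: assumes "p \<noteq> []" "set p \<subseteq> I"
  shows "measure M (cy p) = mu0 (p!0) * (\<Prod>k<length p - 1. P (p!k) (p!(Suc k)))"
proof -
  have "cy p = {\<omega>\<in>space M. \<forall>k\<le>length p - 1. tau k \<omega> = p!k}"
    using assms(1) unfolding cy_def by (cases p) (auto simp: less_Suc_eq_le)
  moreover have "\<forall>k\<le>length p - 1. p!k \<in> I"
  proof (intro allI impI)
    fix k assume "k \<le> length p - 1"
    then have "k < length p" using assms(1) by (cases p) auto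
    then show "p!k \<in> I" using assms(2) nth_mem by blast
  qed
  ultimately show ?thesis using cyl[of "length p - 1" "\<lambda>k. p!k"] by simp
qed

lemma cy_snoc: assumes "p \<noteq> []" "set p \<subseteq> I" "j \<in> I"
  shows "measure M (cy (p@[j])) = measure M (cy p) * P (last p) j"
proof -
  have "measure M (cy (p@[j])) = mu0 ((p@[j])!0) * (\<Prod>k<length p. P ((p@[j])!k) ((p@[j])!(Suc k)))"
    using cy_meas[of "p@[j]"] assms by simp
  also have "\<dots> = mu0 (p!0) * ((\<Prod>k<length p - 1. P (p!k) (p!(Suc k))) * P (last p) j)"
  proof -
    obtain m where m: "length p = Suc m" using assms(1) by (cases p) auto
    have "(\<Prod>k<length p. P ((p@[j])!k) ((p@[j])!(Suc k)))
        = (\<Prod>k<m. P ((p@[j])!k) ((p@[j])!(Suc k))) * P ((p@[j])!m) ((p@[j])!(Suc m))"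
      by (simp add: m)
    also have "(\<Prod>k<m. P ((p@[j])!k) ((p@[j])!(Suc k))) = (\<Prod>k<m. P (p!k) (p!(Suc k)))"
      by (rule prod.cong) (auto simp: nth_append m)
    also have "P ((p@[j])!m) ((p@[j])!(Suc m)) = P (last p) j"
      using m assms(1) by (simp add: nth_append last_conv_nth)
    finally show ?thesis using m assms by (simp add: nth_append)
  qed
  also have "\<dots> = measure M (cy p) * P (last p) j"
    using cy_meas[OF assms(1,2)] by simp
  finally show ?thesis .
qed

definition T :: "nat \<Rightarrow> 'i \<Rightarrow> 'i \<Rightarrow> 'i list set" where
  "T n i l = {p. length p = Suc n \<and> set p \<subseteq> I \<and> p!0 = i \<and> p!n = l}"

lemma T_countable: "countable (T n i l)"
  by (rule countable_subset[of _ "lists I"]) (auto simp: T_def cI)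

lemma T_union1: "{\<omega>\<in>space M. tau 0 \<omega> = i \<and> tau n \<omega> = l} = (\<Union>p\<in>T n i l. cy p)"
proof (intro equalityI subsetI)
  fix \<omega> assume "\<omega> \<in> {\<omega>\<in>space M. tau 0 \<omega> = i \<and> tau n \<omega> = l}"
  then have w: "\<omega> \<in> space M" and e: "i = tau 0 \<omega>" "l = tau n \<omega>" by auto
  let ?p = "map (\<lambda>k. tau k \<omega>) [0..<Suc n]"
  have "?p \<in> T n i l" using w e rng by (auto simp: T_def simp del: upt_Suc)
  moreover have "\<omega> \<in> cy ?p" using w unfolding cy_def by (auto simp del: upt_Suc)
  ultimately show "\<omega> \<in> (\<Union>p\<in>T n i l. cy p)" by blast
next
  fix \<omega> assume "\<omega> \<in> (\<Union>p\<in>T n i l. cy p)"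
  then obtain p where "p \<in> T n i l" "\<omega> \<in> cy p" by auto
  then show "\<omega> \<in> {\<omega>\<in>space M. tau 0 \<omega> = i \<and> tau n \<omega> = l}"
    by (auto simp: cy_def T_def)
qed

lemma T_union2: "{\<omega>\<in>space M. tau 0 \<omega> = i \<and> tau n \<omega> = l \<and> tau (Suc n) \<omega> = j}
   = (\<Union>p\<in>T n i l. cy (p@[j]))"
proof (intro equalityI subsetI)
  fix \<omega> assume "\<omega> \<in> {\<omega>\<in>space M. tau 0 \<omega> = i \<and> tau n \<omega> = l \<and> tau (Suc n) \<omega> = j}"
  then have w: "\<omega> \<in> space M" and e: "i = tau 0 \<omega>" "l = tau n \<omega>" "j = tau (Suc n) \<omega>" by auto
  let ?p = "map (\<lambda>k. tau k \<omega>) [0..<Suc n]"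
  have "?p \<in> T n i l" using w e rng by (auto simp: T_def simp del: upt_Suc)
  moreover have "\<omega> \<in> cy (?p@[j])" using w e unfolding cy_def
    by (auto simp: nth_append less_Suc_eq simp del: upt_Suc)
  ultimately show "\<omega> \<in> (\<Union>p\<in>T n i l. cy (p@[j]))" by blast
next
  fix \<omega> assume "\<omega> \<in> (\<Union>p\<in>T n i l. cy (p@[j]))"
  then obtain p where p: "p \<in> T n i l" "\<omega> \<in> cy (p@[j])" by auto
  then have w: "\<omega> \<in> space M" and a: "\<forall>k<Suc (Suc n). tau k \<omega> = (p@[j])!k"
    by (auto simp: cy_def T_def)
  have "tau 0 \<omega> = i" using a[rule_format, of 0] p(1) by (auto simp: T_def nth_append)
  moreover have "tau n \<omega> = l" using a[rule_format, of n] p(1) by (auto simp: T_def nth_append)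
  moreover have "tau (Suc n) \<omega> = j" using a[rule_format, of "Suc n"] p(1) by (auto simp: T_def nth_append)
  ultimately show "\<omega> \<in> {\<omega>\<in>space M. tau 0 \<omega> = i \<and> tau n \<omega> = l \<and> tau (Suc n) \<omega> = j}"
    using w by auto
qed

lemma cy_disj: "disjoint_family_on cy (T n i l)"
  unfolding disjoint_family_on_def cy_def T_def by (auto simp: list_eq_iff_nth_eq)

lemma cy_disj2: "disjoint_family_on (\<lambda>p. cy (p@[j])) (T n i l)"
  unfolding disjoint_family_on_def cy_def T_def
  by (auto simp: list_eq_iff_nth_eq nth_append)

end


context mk begin

interpretation prob_space M by (rule prob)

lemma ms: assumes "j \<in> I"
  shows "measure M {\<omega>\<in>space M. tau 0 \<omega> = i \<and> tau n \<omega> = l \<and> tau (Suc n) \<omega> = j}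
     = measure M {\<omega>\<in>space M. tau 0 \<omega> = i \<and> tau n \<omega> = l} * P l j"
proof -
  have h1: "((\<lambda>p. measure M (cy p)) has_sum measure M {\<omega>\<in>space M. tau 0 \<omega> = i \<and> tau n \<omega> = l}) (T n i l)"
    unfolding T_union1 by (rule prob_has_sum_UN[OF prob T_countable cy_sets cy_disj])
  have h2: "((\<lambda>p. measure M (cy (p@[j]))) has_sum measure M {\<omega>\<in>space M. tau 0 \<omega> = i \<and> tau n \<omega> = l \<and> tau (Suc n) \<omega> = j}) (T n i l)"
    unfolding T_union2 by (rule prob_has_sum_UN[OF prob T_countable cy_sets cy_disj2])
  have eq: "measure M (cy (p@[j])) = measure M (cy p) * P l j" if "p \<in> T n i l" for p
  proof -
    from that have "p \<noteq> []" "set p \<subseteq> I" and ln: "length p = Suc n" "p!n = l"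
      by (auto simp: T_def)
    moreover have "last p = l" using ln last_conv_nth[of p] by (cases p) auto
    ultimately show ?thesis using cy_snoc[of p j] assms by simp
  qed
  have h3: "((\<lambda>p. measure M (cy (p@[j]))) has_sum measure M {\<omega>\<in>space M. tau 0 \<omega> = i \<and> tau n \<omega> = l} * P l j) (T n i l)"
    using has_sum_cmult_left[OF h1, of "P l j"] by (rule has_sum_cong[THEN iffD1, rotated]) (simp add: eq)
  show ?thesis using has_sum_unique[OF h2 h3] .
qed

lemma mu0_eq: "measure M {\<omega>\<in>space M. tau 0 \<omega> = i} = mu0 i" if "i \<in> I"
  using cyl[of 0 "\<lambda>_. i"] that by simp

lemma mu0_nonneg: "i \<in> I \<Longrightarrow> mu0 i \<ge> 0"
  using mu0_eq[of i] by (metis measure_nonneg)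

lemma sets_tau[measurable]: "{\<omega>\<in>space M. Q (tau n \<omega>)} \<in> sets M"
proof -
  have "{\<omega>\<in>space M. Q (tau n \<omega>)} = tau n -` {x. Q x} \<inter> space M" by auto
  then show ?thesis using measurable_sets[OF meas[of n], of "{x. Q x}"] by simp
qed

lemma nst: assumes "i \<in> I" "j \<in> I"
  shows "measure M {\<omega>\<in>space M. tau 0 \<omega> = i \<and> tau n \<omega> = j} = mu0 i * nstep I P n i j"
  using assms(2)
proof (induction n arbitrary: j)
  case 0
  show ?case
  proof (cases "i = j")
    case True then show ?thesis using mu0_eq[OF assms(1)] by simp
  next
    case False
    then have "{\<omega>\<in>space M. tau 0 \<omega> = i \<and> tau 0 \<omega> = j} = {}" by auto
    then have "measure M {\<omega>\<in>space M. tau 0 \<omega> = i \<and> tau 0 \<omega> = j} = measure M {}"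
      by (rule arg_cong)
    then show ?thesis using False by simp
  qed
next
  case (Suc n)
  have U: "{\<omega>\<in>space M. tau 0 \<omega> = i \<and> tau (Suc n) \<omega> = j}
     = (\<Union>l\<in>I. {\<omega>\<in>space M. tau 0 \<omega> = i \<and> tau n \<omega> = l \<and> tau (Suc n) \<omega> = j})"
    using rng by auto
  have "((\<lambda>l. measure M {\<omega>\<in>space M. tau 0 \<omega> = i \<and> tau n \<omega> = l \<and> tau (Suc n) \<omega> = j}) has_sum
        measure M {\<omega>\<in>space M. tau 0 \<omega> = i \<and> tau (Suc n) \<omega> = j}) I"
    unfolding U
    by (rule prob_has_sum_UN[OF prob cI]) (auto simp: disjoint_family_on_def)
  moreover have "measure M {\<omega>\<in>space M. tau 0 \<omega> = i \<and> tau n \<omega> = l \<and> tau (Suc n) \<omega> = j}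
      = mu0 i * (nstep I P n i l * P l j)" if "l \<in> I" for l
    using ms[OF Suc.prems, of i n l] Suc.IH[OF that] by simp
  ultimately have "((\<lambda>l. mu0 i * (nstep I P n i l * P l j)) has_sum
        measure M {\<omega>\<in>space M. tau 0 \<omega> = i \<and> tau (Suc n) \<omega> = j}) I"
    by (rule has_sum_cong[THEN iffD1, rotated]) simp
  then have "measure M {\<omega>\<in>space M. tau 0 \<omega> = i \<and> tau (Suc n) \<omega> = j}
     = (\<Sum>\<^sub>\<infinity>l\<in>I. mu0 i * (nstep I P n i l * P l j))"
    by (simp add: infsumI)
  also have "\<dots> = mu0 i * nstep I P (Suc n) i j"
    by (simp add: infsum_cmult_right')
  finally show ?case .
qed

lemma mu0_sum: "(mu0 has_sum 1) I"
proof -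
  have U: "space M = (\<Union>i\<in>I. {\<omega>\<in>space M. tau 0 \<omega> = i})" using rng by auto
  have "((\<lambda>i. measure M {\<omega>\<in>space M. tau 0 \<omega> = i}) has_sum measure M (space M)) I"
    by (subst (2) U, rule prob_has_sum_UN[OF prob cI]) (auto simp: disjoint_family_on_def)
  then have "((\<lambda>i. measure M {\<omega>\<in>space M. tau 0 \<omega> = i}) has_sum 1) I"
    by (simp add: prob_space.prob_space[OF prob])
  then show ?thesis
    using has_sum_cong[of I "\<lambda>i. measure M {\<omega>\<in>space M. tau 0 \<omega> = i}" mu0 1] mu0_eq by auto
qed

lemma q_sum: assumes "j \<in> I"
  shows "((\<lambda>i. mu0 i * nstep I P n i j) has_sum measure M {\<omega>\<in>space M. tau n \<omega> = j}) I"
proof -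
  have U: "{\<omega>\<in>space M. tau n \<omega> = j} = (\<Union>i\<in>I. {\<omega>\<in>space M. tau 0 \<omega> = i \<and> tau n \<omega> = j})"
    using rng by auto
  have "((\<lambda>i. measure M {\<omega>\<in>space M. tau 0 \<omega> = i \<and> tau n \<omega> = j}) has_sum measure M {\<omega>\<in>space M. tau n \<omega> = j}) I"
    by (subst U, rule prob_has_sum_UN[OF prob cI]) (auto simp: disjoint_family_on_def)
  then show ?thesis
    by (rule has_sum_cong[THEN iffD1, rotated]) (auto simp: nst assms)
qed

lemma q_lower: assumes "j \<in> I" and bd: "\<And>i. i \<in> I \<Longrightarrow> \<bar>nstep I P n i j - pj\<bar> \<le> e"
  shows "measure M {\<omega>\<in>space M. tau n \<omega> = j} \<ge> pj - e"
proof -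
  have "((\<lambda>i. mu0 i * (pj - e)) has_sum 1 * (pj - e)) I"
    by (rule has_sum_cmult_left[OF mu0_sum])
  moreover note q_sum[OF assms(1), of n]
  moreover have "mu0 i * (pj - e) \<le> mu0 i * nstep I P n i j" if "i \<in> I" for i
    using bd[OF that] mu0_nonneg[OF that] by (intro mult_left_mono) auto
  ultimately show ?thesis using has_sum_mono by fastforce
qed

end


lemma zproc_meas:
  fixes A :: "'i \<Rightarrow> real^'n^'n"
  assumes cI: "countable I" and meas: "\<And>t. tau t \<in> measurable M (count_space UNIV)"
    and rng: "\<And>t \<omega>. \<omega> \<in> space M \<Longrightarrow> tau t \<omega> \<in> I"
  shows "(\<lambda>\<omega>. zproc A tau z0 t \<omega>) \<in> borel_measurable M"
proof (induction t)
  case 0 then show ?case by simp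
next
  case (Suc t)
  have g: "tau (Suc t) \<in> measurable M (count_space I)"
    unfolding measurable_count_space_eq_countable[OF cI]
    using rng measurable_sets[OF meas[of "Suc t"]] by auto
  have "(\<lambda>\<omega>. (\<lambda>\<eta> \<omega>. A \<eta> *v zproc A tau z0 t \<omega>) (tau (Suc t) \<omega>) \<omega>) \<in> borel_measurable M"
  proof (rule measurable_compose_countable'[OF _ g cI])
    fix \<eta> show "(\<lambda>\<omega>. A \<eta> *v zproc A tau z0 t \<omega>) \<in> borel_measurable M"
      by (rule measurable_compose[OF Suc.IH]) (intro borel_measurable_continuous_onI continuous_intros)
  qed
  then show ?case by simp
qed

lemma norm1_meas: "(\<lambda>\<omega>. ln (norm1 (z \<omega>)) / c) \<in> borel_measurable M" if "z \<in> borel_measurable M"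
  for z :: "'a \<Rightarrow> real^'n"
proof -
  have "(\<lambda>\<omega>. norm1 (z \<omega>)) \<in> borel_measurable M"
    unfolding norm1_def
    by (rule measurable_compose[OF that, where g="\<lambda>x. \<Sum>i\<in>UNIV. \<bar>x $ i\<bar>"])
       (intro borel_measurable_continuous_onI continuous_intros)
  then show ?thesis by measurable
qed

lemma leslie_mult: "leslie2 f F s *v x = vector [f * x$1 + F * x$2, s * x$1]"
  by (simp add: vec_eq_iff forall_2 matrix_vector_mult_def sum_2 leslie2_def)

lemma leslie_nth[simp]: "leslie2 f F s $ 1 $ 1 = f" "leslie2 f F s $ 1 $ 2 = F"
   "leslie2 f F s $ 2 $ 1 = s" "leslie2 f F s $ 2 $ 2 = 0"
  by (simp_all add: leslie2_def)

lemma norm1_2: "norm1 (x::real^2) = \<bar>x$1\<bar> + \<bar>x$2\<bar>"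
  by (simp add: norm1_def sum_2)

lemma Wpert_le_WM: "Wpert A B i j \<le> WM A B"
  unfolding WM_def by (rule Max_ge) auto

lemma WM_le: "(\<And>i j. Wpert A B i j \<le> K) \<Longrightarrow> WM A B \<le> K"
  unfolding WM_def by (subst Max_le_iff) auto



lemma spec_rad_ge:
  fixes a b c :: real
  assumes "a > 0" "b > 0" "c > 0"
  defines "r \<equiv> (a + sqrt (a\<^sup>2 + 4*b*c)) / 2"
  shows "spectral_radius (leslie2 a b c) \<ge> r" and "r > 0" and "r\<^sup>2 = a * r + b * c"
proof -
  define r' where "r' = (a - sqrt (a\<^sup>2 + 4*b*c)) / 2"
  have sq: "(sqrt (a\<^sup>2 + 4*b*c))\<^sup>2 = a\<^sup>2 + 4*b*c" using assms by simp
  have sum: "r + r' = a" and prod: "r * r' = - (b*c)"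
    unfolding r_def r'_def using sq by (auto simp: field_simps power2_eq_square)
  have D: "det (mat x - complexify (leslie2 a b c)) = (x - of_real r) * (x - of_real r')" for x
  proof -
    have "det (mat x - complexify (leslie2 a b c)) = (x - of_real a) * x - of_real b * of_real c"
      by (simp add: det_2 complexify_def mat_def)
    also have "\<dots> = x*x - of_real (r + r') * x + of_real (r*r')"
      using sum prod by (simp add: algebra_simps)
    also have "\<dots> = (x - of_real r) * (x - of_real r')"
      by (simp add: algebra_simps)
    finally show ?thesis .
  qed
  have S: "{x. det (mat x - complexify (leslie2 a b c)) = 0} = {of_real r, of_real r'}"
    by (auto simp: D)
  show "r > 0" unfolding r_def using assms
    by (simp add: add_pos_nonneg)
  show "r\<^sup>2 = a * r + b * c"
  proof -
    have "r\<^sup>2 = r*(r+r') - r*r'" by (simp add: power2_eq_square algebra_simps)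
    then show ?thesis using sum prod by simp
  qed
  show "spectral_radius (leslie2 a b c) \<ge> r"
    unfolding spectral_radius_def S using \<open>r > 0\<close> by simp
qed



lemma path_bounds:
  fixes z :: "nat \<Rightarrow> real^2" and Gs fs Fs ss :: "nat \<Rightarrow> real"
  assumes zs: "\<And>t. z (Suc t) = leslie2 (fs (Suc t)) (Fs (Suc t)) (ss (Suc t)) *v z t"
    and ent: "\<And>k. fs k \<ge> \<alpha> \<and> Fs k \<ge> \<alpha> \<and> ss k \<ge> \<alpha>" and al: "\<alpha> > 0"
    and le: "\<And>k. fs k \<le> Gs k * a \<and> Fs k \<le> Gs k * b \<and> ss k \<le> Gs k * c"
    and G0: "\<And>k. Gs k \<ge> 0" and abc: "a \<ge> 0" "b \<ge> 0" "c \<ge> 0" and r0: "r \<ge> 0"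
    and rr: "r\<^sup>2 = a * r + b * c"
    and z0: "z 0 $ 1 \<ge> 0" "z 0 $ 2 \<ge> 0" "z 0 $ 1 \<le> m * r" "z 0 $ 2 \<le> m * c" and m0: "m \<ge> 0"
  shows "z t $ 1 \<ge> 0 \<and> z t $ 2 \<ge> 0 \<and>
         z t $ 1 \<le> (\<Prod>k\<in>{1..t}. Gs k) * m * r^t * r \<and>
         z t $ 2 \<le> (\<Prod>k\<in>{1..t}. Gs k) * m * r^t * c \<and>
         norm1 (z t) \<ge> \<alpha>^t * norm1 (z 0)"
proof (induction t)
  case 0 then show ?case using z0 by simp
next
  case (Suc t)
  define Q where "Q = (\<Prod>k\<in>{1..t}. Gs k) * m * r^t"
  have Q0: "Q \<ge> 0" unfolding Q_def using G0 m0 r0 by (simp add: prod_nonneg)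
  define f' where "f' = fs (Suc t)"
  define F' where "F' = Fs (Suc t)"
  define s' where "s' = ss (Suc t)"
  define G where "G = Gs (Suc t)"
  have QS: "(\<Prod>k\<in>{1..Suc t}. Gs k) * m * r^(Suc t) = G * Q * r"
    unfolding Q_def G_def by (simp add: prod.nat_ivl_Suc' algebra_simps)
  obtain z1 z2 where zz: "z t $ 1 = z1" "z t $ 2 = z2" by blast
  have IH: "z1 \<ge> 0" "z2 \<ge> 0" "z1 \<le> Q * r" "z2 \<le> Q * c" "norm1 (z t) \<ge> \<alpha>^t * norm1 (z 0)"
    using Suc.IH zz unfolding Q_def by auto
  have e: "z (Suc t) $ 1 = f' * z1 + F' * z2" "z (Suc t) $ 2 = s' * z1"
    using zs[of t] zz unfolding f'_def F'_def s'_def by (simp_all add: leslie_mult)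
  have ent': "f' \<ge> \<alpha>" "F' \<ge> \<alpha>" "s' \<ge> \<alpha>" using ent unfolding f'_def F'_def s'_def by auto
  have le': "f' \<le> G * a" "F' \<le> G * b" "s' \<le> G * c" using le unfolding f'_def F'_def s'_def G_def by auto
  have G0': "G \<ge> 0" using G0 unfolding G_def by auto
  have "f' * z1 \<le> (G * a) * (Q * r)"
    by (rule mult_mono) (use le' IH G0' abc in auto)
  moreover have "F' * z2 \<le> (G * b) * (Q * c)"
    by (rule mult_mono) (use le' IH G0' abc in auto)
  ultimately have u1: "f' * z1 + F' * z2 \<le> G * Q * (a * r + b * c)" by (simp add: algebra_simps)
  have "G * Q * (a * r + b * c) = G * Q * r * r" using rr by (simp add: power2_eq_square)
  with u1 have u1': "z (Suc t) $ 1 \<le> G * Q * r * r" using e by simp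
  have "s' * z1 \<le> (G * c) * (Q * r)"
    by (rule mult_mono) (use le' IH G0' abc in auto)
  then have u2: "z (Suc t) $ 2 \<le> G * Q * r * c" using e by (simp add: algebra_simps)
  have n1: "z (Suc t) $ 1 \<ge> 0" "z (Suc t) $ 2 \<ge> 0" using e IH ent' al by simp_all
  have "norm1 (z (Suc t)) = f' * z1 + F' * z2 + s' * z1" using e n1 by (simp add: norm1_2)
  also have "\<dots> \<ge> \<alpha> * z1 + \<alpha> * z2"
  proof -
    have "\<alpha> * z1 \<le> f' * z1" using ent' IH by (simp add: mult_right_mono)
    moreover have "\<alpha> * z2 \<le> F' * z2" using ent' IH by (simp add: mult_right_mono)
    moreover have "0 \<le> s' * z1" using ent' IH al by simp
    ultimately show ?thesis by linarith
  qed
  finally have "norm1 (z (Suc t)) \<ge> \<alpha> * norm1 (z t)" using IH zz by (simp add: norm1_2 algebra_simps)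
  moreover have "\<alpha> * norm1 (z t) \<ge> \<alpha> * (\<alpha>^t * norm1 (z 0))"
    using IH(5) al by simp
  ultimately have "norm1 (z (Suc t)) \<ge> \<alpha>^Suc t * norm1 (z 0)" by (simp add: algebra_simps)
  moreover have "z (Suc t) $ 1 \<le> (\<Prod>k\<in>{1..Suc t}. Gs k) * m * r^(Suc t) * r"
    unfolding QS using u1' by simp
  moreover have "z (Suc t) $ 2 \<le> (\<Prod>k\<in>{1..Suc t}. Gs k) * m * r^(Suc t) * c"
    unfolding QS using u2 by simp
  ultimately show ?case using n1 by blast
qed



context mk begin

interpretation prob_space M by (rule prob)

lemma limit_arg:
  fixes X :: "nat \<Rightarrow> 'a \<Rightarrow> real" and g pj :: "'i \<Rightarrow> real"
  assumes Xm: "\<And>t. X t \<in> borel_measurable M"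
    and Xb: "\<And>t \<omega>. \<omega> \<in> space M \<Longrightarrow> \<bar>X t \<omega>\<bar> \<le> B"
    and lim: "AE \<omega> in M. (\<lambda>t. X t \<omega>) \<longlonglongrightarrow> L"
    and g: "\<And>j. j \<in> I \<Longrightarrow> 0 \<le> g j \<and> g j \<le> \<Gamma>"
    and Xup: "\<And>t \<omega>. \<omega> \<in> space M \<Longrightarrow> t \<ge> 1 \<Longrightarrow>
               X t \<omega> \<le> (\<Sum>k\<in>{1..t}. g (tau k \<omega>)) / real t + R + K / real t"
    and pj: "\<And>j. j \<in> I \<Longrightarrow> pj j \<ge> 0" "(pj has_sum 1) I"
    and conv: "\<And>n i j. i \<in> I \<Longrightarrow> j \<in> I \<Longrightarrow> \<bar>nstep I P n i j - pj j\<bar> \<le> C * rr ^ n"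
    and rr: "0 \<le> rr" "rr < 1"
    and summ: "(\<lambda>j. pj j * g j) summable_on I"
  shows "L \<le> R + (\<Sum>\<^sub>\<infinity>j\<in>I. pj j * g j)"
proof -
  have Xi: "integrable M (X t)" for t
    by (rule integrable_dominated_convergence2[where w="\<lambda>_. B" and f="\<lambda>_. L"])
       (use Xm Xb lim in auto)
  have LX: "(\<lambda>t. integral\<^sup>L M (X t)) \<longlonglongrightarrow> L"
    using integral_dominated_convergence[where w="\<lambda>_. B" and f="\<lambda>_. L" and s=X and M=M]
      Xm Xb lim by (auto simp: prob_space.prob_space[OF prob])
  have I0: "I \<noteq> {}" using pj(2) by (metis infsumI infsum_empty zero_neq_one)
  then obtain j0 where "j0 \<in> I" by auto
  have \<Gamma>0: "\<Gamma> \<ge> 0" using g[OF \<open>j0 \<in> I\<close>] by auto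
  have C0: "C \<ge> 0" using conv[OF \<open>j0 \<in> I\<close> \<open>j0 \<in> I\<close>, of 0] by simp
  have main: "L \<le> R + (\<Sum>\<^sub>\<infinity>j\<in>I. pj j * g j) + \<Gamma> * e" if e: "e > 0" for e
  proof -
    have "eventually (\<lambda>J. dist (sum pj J) 1 < e) (finite_subsets_at_top I)"
      using pj(2) e unfolding has_sum_def tendsto_iff by blast
    then obtain J where J: "finite J" "J \<subseteq> I" "dist (sum pj J) 1 < e"
      unfolding eventually_finite_subsets_at_top by blast
    define aJ where "aJ = \<Gamma> + (\<Sum>j\<in>J. (g j - \<Gamma>) * pj j)"
    define K' where "K' = K + real (card J) * \<Gamma> * C / (1 - rr)"
    define E where "E k j = {\<omega>\<in>space M. tau k \<omega> = j}" for k j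
    have Es[measurable]: "E k j \<in> sets M" for k j unfolding E_def by measurable
    have bnd: "integral\<^sup>L M (X t) \<le> aJ + R + K' / real t" if t: "t \<ge> 1" for t
    proof -
      define Z where "Z \<omega> = (\<Sum>k\<in>{1..t}. \<Sum>j\<in>J. (g j - \<Gamma>) * indicator (E k j) \<omega>)" for \<omega>
      define Y where "Y \<omega> = Z \<omega> / real t + (\<Gamma> + R + K / real t)" for \<omega>
      have ii: "integrable M (\<lambda>\<omega>. (g j - \<Gamma>) * indicator (E k j) \<omega>)" for k j
        by (intro Bochner_Integration.integrable_mult_right integrable_real_indicator) (auto simp: Es less_top[symmetric])
      have Zi: "integrable M Z"
        unfolding Z_def by (intro Bochner_Integration.integrable_sum ii)
      have Yi: "integrable M Y" unfolding Y_def
        by (rule Bochner_Integration.integrable_add) (use Zi in auto)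
      have IZ: "integral\<^sup>L M Z = (\<Sum>k\<in>{1..t}. \<Sum>j\<in>J. (g j - \<Gamma>) * measure M (E k j))"
      proof -
        have "integral\<^sup>L M Z = (\<Sum>k\<in>{1..t}. integral\<^sup>L M (\<lambda>\<omega>. \<Sum>j\<in>J. (g j - \<Gamma>) * indicator (E k j) \<omega>))"
          unfolding Z_def by (rule Bochner_Integration.integral_sum) (intro Bochner_Integration.integrable_sum ii)
        also have "\<dots> = (\<Sum>k\<in>{1..t}. \<Sum>j\<in>J. integral\<^sup>L M (\<lambda>\<omega>. (g j - \<Gamma>) * indicator (E k j) \<omega>))"
          by (intro sum.cong refl Bochner_Integration.integral_sum ii)
        also have "\<dots> = (\<Sum>k\<in>{1..t}. \<Sum>j\<in>J. (g j - \<Gamma>) * measure M (E k j))"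
        proof (intro sum.cong refl)
          fix k j
          have "E k j \<inter> space M = E k j" using sets.sets_into_space[OF Es[of k j]] by auto
          then show "integral\<^sup>L M (\<lambda>\<omega>. (g j - \<Gamma>) * indicator (E k j) \<omega>) = (g j - \<Gamma>) * measure M (E k j)"
            by simp
        qed
        finally show ?thesis .
      qed
      have IY: "integral\<^sup>L M Y = integral\<^sup>L M Z / real t + (\<Gamma> + R + K / real t)"
      proof -
        have "integral\<^sup>L M Y = integral\<^sup>L M (\<lambda>\<omega>. Z \<omega> / real t) + integral\<^sup>L M (\<lambda>_. \<Gamma> + R + K / real t)"
          unfolding Y_def by (rule Bochner_Integration.integral_add) (use Zi in auto)
        then show ?thesis by (simp add: prob_space.prob_space[OF prob])
      qed
      have XY: "X t \<omega> \<le> Y \<omega>" if w: "\<omega> \<in> space M" for \<omega>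
      proof -
        have gk: "g (tau k \<omega>) \<le> \<Gamma> + (\<Sum>j\<in>J. (g j - \<Gamma>) * indicator (E k j) \<omega>)" for k
        proof -
          have "(\<Sum>j\<in>J. (g j - \<Gamma>) * indicator (E k j) \<omega>) = (\<Sum>j\<in>J. if j = tau k \<omega> then g j - \<Gamma> else 0)"
            by (rule sum.cong) (auto simp: E_def w indicator_def)
          also have "\<dots> = (if tau k \<omega> \<in> J then g (tau k \<omega>) - \<Gamma> else 0)"
            using J(1) by (simp add: sum.delta')
          finally show ?thesis using g[OF rng[OF w]] by auto
        qed
        have "(\<Sum>k\<in>{1..t}. g (tau k \<omega>)) \<le> (\<Sum>k\<in>{1..t}. \<Gamma> + (\<Sum>j\<in>J. (g j - \<Gamma>) * indicator (E k j) \<omega>))"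
          by (rule sum_mono) (rule gk)
        also have "\<dots> = real t * \<Gamma> + (\<Sum>k\<in>{1..t}. \<Sum>j\<in>J. (g j - \<Gamma>) * indicator (E k j) \<omega>)"
          by (simp add: sum.distrib)
        finally have "(\<Sum>k\<in>{1..t}. g (tau k \<omega>)) / real t \<le> (real t * \<Gamma> + (\<Sum>k\<in>{1..t}. \<Sum>j\<in>J. (g j - \<Gamma>) * indicator (E k j) \<omega>)) / real t"
          using t by (simp add: divide_right_mono)
        also have "\<dots> = \<Gamma> + (\<Sum>k\<in>{1..t}. \<Sum>j\<in>J. (g j - \<Gamma>) * indicator (E k j) \<omega>) / real t"
          using t by (simp add: add_divide_distrib)
        finally show ?thesis using Xup[OF w t] unfolding Y_def Z_def by linarith
      qed
      have "integral\<^sup>L M (X t) \<le> integral\<^sup>L M Y"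
        by (rule integral_mono[OF Xi Yi XY])
      also have "integral\<^sup>L M Y = (\<Sum>k\<in>{1..t}. \<Sum>j\<in>J. (g j - \<Gamma>) * measure M (E k j)) / real t + (\<Gamma> + R + K / real t)"
        unfolding IY IZ ..
      also have "(\<Sum>k\<in>{1..t}. \<Sum>j\<in>J. (g j - \<Gamma>) * measure M (E k j))
          \<le> (\<Sum>k\<in>{1..t}. (\<Sum>j\<in>J. (g j - \<Gamma>) * pj j) + real (card J) * \<Gamma> * C * rr ^ k)"
      proof (rule sum_mono)
        fix k
        have "(\<Sum>j\<in>J. (g j - \<Gamma>) * measure M (E k j)) \<le> (\<Sum>j\<in>J. (g j - \<Gamma>) * pj j + \<Gamma> * C * rr ^ k)"
        proof (rule sum_mono)
          fix j assume jJ: "j \<in> J"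
          then have jI: "j \<in> I" using J by auto
          have q: "measure M (E k j) \<ge> pj j - C * rr ^ k"
            unfolding E_def by (rule q_lower[OF jI]) (rule conv[OF _ jI])
          have "(g j - \<Gamma>) * measure M (E k j) \<le> (g j - \<Gamma>) * (pj j - C * rr ^ k)"
            using g[OF jI] q by (intro mult_left_mono_neg) auto
          also have "\<dots> = (g j - \<Gamma>) * pj j + (\<Gamma> - g j) * (C * rr ^ k)" by (simp add: algebra_simps)
          also have "\<dots> \<le> (g j - \<Gamma>) * pj j + \<Gamma> * (C * rr ^ k)"
            using g[OF jI] C0 rr by (intro add_left_mono mult_right_mono) auto
          finally show "(g j - \<Gamma>) * measure M (E k j) \<le> (g j - \<Gamma>) * pj j + \<Gamma> * C * rr ^ k"
            by (simp add: mult.assoc)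
        qed
        also have "\<dots> = (\<Sum>j\<in>J. (g j - \<Gamma>) * pj j) + real (card J) * \<Gamma> * C * rr ^ k"
          by (simp add: sum.distrib)
        finally show "(\<Sum>j\<in>J. (g j - \<Gamma>) * measure M (E k j)) \<le> (\<Sum>j\<in>J. (g j - \<Gamma>) * pj j) + real (card J) * \<Gamma> * C * rr ^ k" .
      qed
      also have "\<dots> = real t * (\<Sum>j\<in>J. (g j - \<Gamma>) * pj j) + real (card J) * \<Gamma> * C * (\<Sum>k\<in>{1..t}. rr ^ k)"
        by (simp add: sum.distrib sum_distrib_left)
      also have "\<dots> \<le> real t * (\<Sum>j\<in>J. (g j - \<Gamma>) * pj j) + real (card J) * \<Gamma> * C * (1 / (1 - rr))"
      proof -
        have "(\<Sum>k\<in>{1..t}. rr ^ k) \<le> (\<Sum>k<Suc t. rr ^ k)"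
          by (rule sum_mono2) (use rr in auto)
        also have "\<dots> = (1 - rr ^ Suc t) / (1 - rr)"
          using rr by (subst sum_gp_strict) simp
        also have "\<dots> \<le> 1 / (1 - rr)" using rr by (simp add: divide_right_mono)
        finally show ?thesis using \<Gamma>0 C0 by (intro add_left_mono mult_left_mono) auto
      qed
      finally have "integral\<^sup>L M (X t) \<le> (real t * (\<Sum>j\<in>J. (g j - \<Gamma>) * pj j) + real (card J) * \<Gamma> * C * (1 / (1 - rr))) / real t + (\<Gamma> + R + K / real t)"
        using t by (simp add: divide_right_mono)
      also have "\<dots> = aJ + R + K' / real t"
        using t rr unfolding aJ_def K'_def by (simp add: field_simps)
      finally show ?thesis .
    qed
    have "(\<lambda>t. aJ + R + K' / real t) \<longlonglongrightarrow> aJ + R + 0"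
      by (intro tendsto_intros)
    then have "L \<le> aJ + R + 0"
      using bnd by (intro LIMSEQ_le[OF LX]) (auto intro!: exI[of _ 1])
    also have "aJ \<le> (\<Sum>\<^sub>\<infinity>j\<in>I. pj j * g j) + \<Gamma> * e"
    proof -
      have "aJ = \<Gamma> * (1 - sum pj J) + (\<Sum>j\<in>J. pj j * g j)"
        unfolding aJ_def by (simp add: algebra_simps sum_subtractf sum_distrib_left)
      moreover have "1 - sum pj J \<le> e" using J(3) by (simp add: dist_real_def)
      moreover have "(\<Sum>j\<in>J. pj j * g j) \<le> (\<Sum>\<^sub>\<infinity>j\<in>I. pj j * g j)"
      proof -
        have "(\<Sum>j\<in>J. pj j * g j) = (\<Sum>\<^sub>\<infinity>j\<in>J. pj j * g j)" using J(1) by simp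
        also have "\<dots> \<le> (\<Sum>\<^sub>\<infinity>j\<in>I. pj j * g j)"
          by (rule infsum_mono_neutral) (use J summ pj g in auto)
        finally show ?thesis .
      qed
      ultimately show ?thesis using \<Gamma>0 by (smt (verit) mult_left_mono)
    qed
    finally show ?thesis by simp
  qed
  show ?thesis
  proof (rule field_le_epsilon)
    fix e :: real assume "e > 0"
    show "L \<le> R + (\<Sum>\<^sub>\<infinity>j\<in>I. pj j * g j) + e"
    proof (cases "\<Gamma> = 0")
      case True then show ?thesis using main[OF \<open>e>0\<close>] \<open>e>0\<close> by simp
    next
      case False
      then have "\<Gamma> > 0" using \<Gamma>0 by simp
      then show ?thesis using main[of "e / \<Gamma>"] \<open>e>0\<close> by simp
    qed
  qed
qed

end


lemma leslie_has_sum: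
  assumes "(x has_sum X) I" "(y has_sum Y) I" "(w has_sum W) I"
  shows "((\<lambda>\<eta>. leslie2 (x \<eta>) (y \<eta>) (w \<eta>)) has_sum leslie2 X Y W) I"
proof -
  have dec: "leslie2 p q u = p *\<^sub>R leslie2 1 0 0 + q *\<^sub>R leslie2 0 1 0 + u *\<^sub>R leslie2 0 0 1" for p q u
    by (simp add: leslie2_def vec_eq_iff forall_2)
  have h: "((\<lambda>\<eta>. h \<eta> *\<^sub>R V) has_sum H *\<^sub>R V) I" if "(h has_sum H) I" for h H and V :: "real^2^2"
    using has_sum_bounded_linear[OF bounded_linear_scaleR_left that] .
  have "((\<lambda>\<eta>. x \<eta> *\<^sub>R leslie2 1 0 0 + y \<eta> *\<^sub>R leslie2 0 1 0 + w \<eta> *\<^sub>R leslie2 0 0 1)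
     has_sum X *\<^sub>R leslie2 1 0 0 + Y *\<^sub>R leslie2 0 1 0 + W *\<^sub>R leslie2 0 0 1) I"
    by (intro has_sum_add h assms)
  then show ?thesis by (simp only: dec[symmetric])
qed

lemma leslie_scale: "c *\<^sub>R leslie2 x y w = leslie2 (c * x) (c * y) (c * w)"
  by (simp add: leslie2_def vec_eq_iff forall_2)

lemma WM_props:
  fixes a b c f F s \<alpha> \<beta> :: real
  assumes abc: "\<alpha> \<le> a" "\<alpha> \<le> b" "\<alpha> \<le> c" and al: "\<alpha> > 0"
    and fFs: "f \<in> {\<alpha>..\<beta>}" "F \<in> {\<alpha>..\<beta>}" "s \<in> {\<alpha>..\<beta>}"
  defines "W \<equiv> WM (leslie2 f F s) (leslie2 a b c)"
  shows "0 \<le> W" "W \<le> (\<beta> - \<alpha>) / \<alpha>" "f \<le> (1 + W) * a" "F \<le> (1 + W) * b" "s \<le> (1 + W) * c"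
proof -
  let ?A = "leslie2 f F s" and ?B = "leslie2 a b c"
  have a0: "a > 0" "b > 0" "c > 0" using abc al by auto
  have w11: "Wpert ?A ?B 1 1 = (f - a) / a" and w12: "Wpert ?A ?B 1 2 = (F - b) / b"
    and w21: "Wpert ?A ?B 2 1 = (s - c) / c" and w22: "Wpert ?A ?B 2 2 = 0"
    using a0 by (simp_all add: Wpert_def)
  show "0 \<le> W" using Wpert_le_WM[of ?A ?B 2 2] w22 unfolding W_def by simp
  have q: "(x - y) / y \<le> (\<beta> - \<alpha>) / \<alpha>" if "x \<le> \<beta>" "\<alpha> \<le> y" for x y
  proof -
    have "(x - y) / y = x / y - 1" using that al by (simp add: field_simps)
    also have "x / y \<le> \<beta> / \<alpha>" using that al fFs by (intro frac_le) auto
    finally show ?thesis using al by (simp add: field_simps)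
  qed
  have "Wpert ?A ?B i j \<le> (\<beta> - \<alpha>) / \<alpha>" for i j
  proof -
    have "\<beta> \<ge> \<alpha>" using fFs by auto
    then have nn: "0 \<le> (\<beta> - \<alpha>) / \<alpha>" using al by simp
    show ?thesis
      using exhaust_2[of i] exhaust_2[of j] w11 w12 w21 w22 q fFs abc nn by auto
  qed
  then show "W \<le> (\<beta> - \<alpha>) / \<alpha>" unfolding W_def by (rule WM_le)
  have "(f - a) / a \<le> W" using Wpert_le_WM[of ?A ?B 1 1] w11 unfolding W_def by simp
  then show "f \<le> (1 + W) * a" using a0 by (simp add: field_simps)
  have "(F - b) / b \<le> W" using Wpert_le_WM[of ?A ?B 1 2] w12 unfolding W_def by simp
  then show "F \<le> (1 + W) * b" using a0 by (simp add: field_simps)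
  have "(s - c) / c \<le> W" using Wpert_le_WM[of ?A ?B 2 1] w21 unfolding W_def by simp
  then show "s \<le> (1 + W) * c" using a0 by (simp add: field_simps)
qed



theorem mainTheorem3:
  fixes M :: "'a measure" and I :: "'i set" and P :: "'i \<Rightarrow> 'i \<Rightarrow> real"
    and pst :: "'i \<Rightarrow> real" and tau :: "nat \<Rightarrow> 'a \<Rightarrow> 'i"
    and f F s :: "'i \<Rightarrow> real" and \<alpha> \<beta> :: real
    and z0 :: "real^2" and logLS :: real
    and Abar :: "real^2^2" and C_II :: real
  assumes markov: "standing_markov M I P pst tau"
    and ab: "0 < \<alpha>" "\<alpha> \<le> \<beta>"
    and bounds: "\<And>\<eta>. \<eta> \<in> I \<Longrightarrow> f \<eta> \<in> {\<alpha>..\<beta>} \<and> F \<eta> \<in> {\<alpha>..\<beta>} \<and> s \<eta> \<in> {\<alpha>..\<beta>}"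
    and z0_nonneg: "\<And>i. z0 $ i \<ge> 0" and z0_nz: "z0 \<noteq> 0"
    and SGR: "AE \<omega> in M.
      (\<lambda>t. ln (norm1 (zproc (\<lambda>\<eta>. leslie2 (f \<eta>) (F \<eta>) (s \<eta>)) tau z0 t \<omega>)) / real t)
        \<longlonglongrightarrow> logLS"
    and Abar_def: "Abar = (\<Sum>\<^sub>\<infinity>\<eta>\<in>I. pst \<eta> *\<^sub>R leslie2 (f \<eta>) (F \<eta>) (s \<eta>))"
    and C_II_def: "C_II = ln (spectral_radius Abar)
                 + (\<Sum>\<^sub>\<infinity>\<eta>\<in>I. pst \<eta> * ln (1 + WM (leslie2 (f \<eta>) (F \<eta>) (s \<eta>)) Abar))"
  shows "logLS \<le> C_II \<and> C_II \<ge> ln (spectral_radius Abar)"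
proof -
  note sm = markov[unfolded standing_markov_def]
  have prob: "prob_space M" using sm by (elim conjE)
  have cI: "countable I" using sm by (elim conjE)
  have stat: "stationary_distribution I P pst" using sm by (elim conjE)
  have meas: "\<forall>t. tau t \<in> measurable M (count_space UNIV)" using sm by (elim conjE)
  have rng: "\<forall>t. \<forall>\<omega>\<in>space M. tau t \<omega> \<in> I" using sm by (elim conjE)
  have "\<exists>C rr. 0 \<le> rr \<and> rr < 1 \<and>
        (\<forall>n. \<forall>i\<in>I. \<forall>j\<in>I. \<bar>nstep I P n i j - pst j\<bar> \<le> C * rr ^ n)" using sm by (elim conjE)
  then obtain C rr where rr: "0 \<le> rr" "rr < 1" and
    conv0: "\<forall>n. \<forall>i\<in>I. \<forall>j\<in>I. \<bar>nstep I P n i j - pst j\<bar> \<le> C * rr ^ n" by blast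
  have "\<exists>mu0. \<forall>n (is :: nat \<Rightarrow> 'i). (\<forall>k\<le>n. is k \<in> I) \<longrightarrow>
        measure M {\<omega>\<in>space M. \<forall>k\<le>n. tau k \<omega> = is k}
          = mu0 (is 0) * (\<Prod>k<n. P (is k) (is (Suc k)))" using sm by (elim conjE)
  then obtain mu0 where cyl: "\<forall>n (is :: nat \<Rightarrow> 'i). (\<forall>k\<le>n. is k \<in> I) \<longrightarrow>
        measure M {\<omega>\<in>space M. \<forall>k\<le>n. tau k \<omega> = is k}
          = mu0 (is 0) * (\<Prod>k<n. P (is k) (is (Suc k)))" by blast
  have meas': "\<And>t. tau t \<in> measurable M (count_space UNIV)" using meas by simp
  have rng': "\<And>t \<omega>. \<omega> \<in> space M \<Longrightarrow> tau t \<omega> \<in> I" using rng by simp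
  have cyl': "\<And>n (is :: nat \<Rightarrow> 'i). (\<forall>k\<le>n. is k \<in> I) \<Longrightarrow>
        measure M {\<omega>\<in>space M. \<forall>k\<le>n. tau k \<omega> = is k}
          = mu0 (is 0) * (\<Prod>k<n. P (is k) (is (Suc k)))"
  proof -
    fix n and "is" :: "nat \<Rightarrow> 'i" assume h: "\<forall>k\<le>n. is k \<in> I"
    show "measure M {\<omega>\<in>space M. \<forall>k\<le>n. tau k \<omega> = is k}
          = mu0 (is 0) * (\<Prod>k<n. P (is k) (is (Suc k)))"
      by (rule mp[OF spec[OF spec[OF cyl, of n], of "is"] h])
  qed
  interpret mk M I P tau mu0
    by (rule mk.intro[OF prob cI meas' rng' cyl'])
  interpret prob_space M by (rule prob)
  have pst0: "\<And>j. j \<in> I \<Longrightarrow> pst j \<ge> 0" and pst1: "(pst has_sum 1) I"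
    using stat unfolding stationary_distribution_def by auto
  define A where "A \<eta> = leslie2 (f \<eta>) (F \<eta>) (s \<eta>)" for \<eta>
  have hs: "((\<lambda>\<eta>. pst \<eta> * h \<eta>) has_sum (\<Sum>\<^sub>\<infinity>\<eta>\<in>I. pst \<eta> * h \<eta>)) I
      \<and> lo \<le> (\<Sum>\<^sub>\<infinity>\<eta>\<in>I. pst \<eta> * h \<eta>) \<and> (\<Sum>\<^sub>\<infinity>\<eta>\<in>I. pst \<eta> * h \<eta>) \<le> hi"
    if h: "\<And>\<eta>. \<eta> \<in> I \<Longrightarrow> h \<eta> \<in> {lo..hi}" and lo: "0 \<le> lo" for h lo hi
  proof -
    have "(\<lambda>\<eta>. pst \<eta> * h \<eta>) summable_on I"
    proof (rule summable_on_comparison_test)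
      show "(\<lambda>\<eta>. pst \<eta> * hi) summable_on I"
        using has_sum_cmult_left[OF pst1] summable_on_def by blast
    next
      fix x assume x: "x \<in> I"
      show "pst x * h x \<le> pst x * hi" using h[OF x] pst0[OF x] by (simp add: mult_left_mono)
      show "0 \<le> pst x * h x" using h[OF x] lo pst0[OF x] by simp
    qed
    then have hh: "((\<lambda>\<eta>. pst \<eta> * h \<eta>) has_sum (\<Sum>\<^sub>\<infinity>\<eta>\<in>I. pst \<eta> * h \<eta>)) I"
      by (rule has_sum_infsum)
    have "lo \<le> (\<Sum>\<^sub>\<infinity>\<eta>\<in>I. pst \<eta> * h \<eta>)"
      using has_sum_mono[OF has_sum_cmult_left[OF pst1, of lo] hh] h pst0
      by (auto simp: mult_left_mono)
    moreover have "(\<Sum>\<^sub>\<infinity>\<eta>\<in>I. pst \<eta> * h \<eta>) \<le> hi"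
      using has_sum_mono[OF hh has_sum_cmult_left[OF pst1, of hi]] h pst0
      by (auto simp: mult_left_mono)
    ultimately show ?thesis using hh by blast
  qed
  define a where "a = (\<Sum>\<^sub>\<infinity>\<eta>\<in>I. pst \<eta> * f \<eta>)"
  define b where "b = (\<Sum>\<^sub>\<infinity>\<eta>\<in>I. pst \<eta> * F \<eta>)"
  define c where "c = (\<Sum>\<^sub>\<infinity>\<eta>\<in>I. pst \<eta> * s \<eta>)"
  have ha: "((\<lambda>\<eta>. pst \<eta> * f \<eta>) has_sum a) I" "\<alpha> \<le> a"
    using hs[of f \<alpha> \<beta>] bounds ab unfolding a_def by auto
  have hb: "((\<lambda>\<eta>. pst \<eta> * F \<eta>) has_sum b) I" "\<alpha> \<le> b"
    using hs[of F \<alpha> \<beta>] bounds ab unfolding b_def by auto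
  have hc: "((\<lambda>\<eta>. pst \<eta> * s \<eta>) has_sum c) I" "\<alpha> \<le> c"
    using hs[of s \<alpha> \<beta>] bounds ab unfolding c_def by auto
  have Abar: "Abar = leslie2 a b c"
  proof -
    have "((\<lambda>\<eta>. pst \<eta> *\<^sub>R leslie2 (f \<eta>) (F \<eta>) (s \<eta>)) has_sum leslie2 a b c) I"
      unfolding leslie_scale by (rule leslie_has_sum[OF ha(1) hb(1) hc(1)])
    then show ?thesis unfolding Abar_def by (rule infsumI)
  qed
  define W where "W \<eta> = WM (A \<eta>) Abar" for \<eta>
  define g where "g \<eta> = ln (1 + W \<eta>)" for \<eta>
  define \<Gamma> where "\<Gamma> = ln (1 + (\<beta> - \<alpha>) / \<alpha>)"
  have Wp: "0 \<le> W \<eta> \<and> W \<eta> \<le> (\<beta> - \<alpha>) / \<alpha> \<and> f \<eta> \<le> (1 + W \<eta>) * a \<and>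
      F \<eta> \<le> (1 + W \<eta>) * b \<and> s \<eta> \<le> (1 + W \<eta>) * c" if "\<eta> \<in> I" for \<eta>
    using WM_props[of \<alpha> a b c "f \<eta>" \<beta> "F \<eta>" "s \<eta>"] bounds[OF that] ha(2) hb(2) hc(2) ab
    unfolding W_def A_def Abar by auto
  have gb: "0 \<le> g \<eta> \<and> g \<eta> \<le> \<Gamma>" if "\<eta> \<in> I" for \<eta>
    using Wp[OF that] unfolding g_def \<Gamma>_def by auto
  have gsum: "(\<lambda>\<eta>. pst \<eta> * g \<eta>) summable_on I"
    using hs[of g 0 \<Gamma>] gb summable_on_def by auto
  define r where "r = (a + sqrt (a\<^sup>2 + 4*b*c)) / 2"
  have a0: "a > 0" "b > 0" "c > 0" using ha(2) hb(2) hc(2) ab by auto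
  have rSR: "r \<le> spectral_radius Abar" and r0: "r > 0" and rr2: "r\<^sup>2 = a * r + b * c"
    using spec_rad_ge[OF a0] unfolding Abar r_def by auto
  have lnr: "ln r \<le> ln (spectral_radius Abar)" using rSR r0 by simp
  have part2: "C_II \<ge> ln (spectral_radius Abar)"
  proof -
    have "0 \<le> (\<Sum>\<^sub>\<infinity>\<eta>\<in>I. pst \<eta> * ln (1 + WM (leslie2 (f \<eta>) (F \<eta>) (s \<eta>)) Abar))"
      using gb pst0 unfolding g_def W_def A_def by (intro infsum_nonneg) auto
    then show ?thesis unfolding C_II_def by simp
  qed
  define Z where "Z t \<omega> = zproc A tau z0 t \<omega>" for t \<omega>
  define X where "X t \<omega> = ln (norm1 (Z t \<omega>)) / real t" for t \<omega>
  define m where "m = z0 $ 1 / r + z0 $ 2 / c"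
  define n0 where "n0 = norm1 z0"
  define K where "K = ln m + ln (r + c)"
  have n0p: "n0 > 0"
  proof -
    have "z0 $ 1 \<noteq> 0 \<or> z0 $ 2 \<noteq> 0" using z0_nz by (auto simp: vec_eq_iff forall_2)
    then show ?thesis unfolding n0_def norm1_2 by auto
  qed
  have m0: "m > 0"
  proof -
    have "z0 $ 1 > 0 \<or> z0 $ 2 > 0" using n0p z0_nonneg[of 1] z0_nonneg[of 2] unfolding n0_def norm1_2 by auto
    then show ?thesis unfolding m_def using r0 a0 z0_nonneg[of 1] z0_nonneg[of 2] by (auto simp: add_pos_nonneg add_nonneg_pos)
  qed
  have pb: "Z t \<omega> $ 1 \<ge> 0 \<and> Z t \<omega> $ 2 \<ge> 0 \<and>
         Z t \<omega> $ 1 \<le> (\<Prod>k\<in>{1..t}. 1 + W (tau k \<omega>)) * m * r^t * r \<and>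
         Z t \<omega> $ 2 \<le> (\<Prod>k\<in>{1..t}. 1 + W (tau k \<omega>)) * m * r^t * c \<and>
         norm1 (Z t \<omega>) \<ge> \<alpha>^t * norm1 (Z 0 \<omega>)" if w: "\<omega> \<in> space M" for t \<omega>
  proof (rule path_bounds[where fs="\<lambda>k. f (tau k \<omega>)" and Fs="\<lambda>k. F (tau k \<omega>)" and ss="\<lambda>k. s (tau k \<omega>)"
        and a=a and b=b and c=c and \<alpha>=\<alpha> and Gs="\<lambda>k. 1 + W (tau k \<omega>)" and m=m and r=r and z="\<lambda>t. Z t \<omega>"])
    show "Z (Suc t) \<omega> = leslie2 (f (tau (Suc t) \<omega>)) (F (tau (Suc t) \<omega>)) (s (tau (Suc t) \<omega>)) *v Z t \<omega>" for t
      unfolding Z_def A_def by simp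
    show "\<alpha> \<le> f (tau k \<omega>) \<and> \<alpha> \<le> F (tau k \<omega>) \<and> \<alpha> \<le> s (tau k \<omega>)" for k
      using bounds[OF rng[rule_format, OF w]] by auto
    show "f (tau k \<omega>) \<le> (1 + W (tau k \<omega>)) * a \<and> F (tau k \<omega>) \<le> (1 + W (tau k \<omega>)) * b \<and> s (tau k \<omega>) \<le> (1 + W (tau k \<omega>)) * c" for k
      using Wp[OF rng[rule_format, OF w]] by auto
    show "0 \<le> 1 + W (tau k \<omega>)" for k using Wp[OF rng[rule_format, OF w]] by auto
    show "Z 0 \<omega> $ 1 \<le> m * r" using r0 a0 z0_nonneg[of 2] unfolding m_def Z_def by (simp add: field_simps)
    show "Z 0 \<omega> $ 2 \<le> m * c" using r0 a0 z0_nonneg[of 1] unfolding m_def Z_def by (simp add: field_simps)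
  qed (use ab a0 r0 rr2 z0_nonneg m0 in \<open>auto simp: Z_def\<close>)
  have Xup: "X t \<omega> \<le> (\<Sum>k\<in>{1..t}. g (tau k \<omega>)) / real t + ln r + K / real t"
    and Xlo: "X t \<omega> \<ge> ln \<alpha> + ln n0 / real t"
    if w: "\<omega> \<in> space M" and t: "t \<ge> 1" for t \<omega>
  proof -
    note pb = pb[OF w, of t]
    have Wn: "0 \<le> W (tau k \<omega>)" for k using Wp[OF rng[rule_format, OF w]] by auto
    have np: "norm1 (Z t \<omega>) > 0"
    proof -
      have "\<alpha>^t * n0 > 0" using ab n0p by simp
      then show ?thesis using pb unfolding n0_def Z_def by auto
    qed
    have "norm1 (Z t \<omega>) \<le> (\<Prod>k\<in>{1..t}. 1 + W (tau k \<omega>)) * m * r^t * (r + c)"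
      using pb unfolding norm1_2 by (simp add: algebra_simps)
    then have "ln (norm1 (Z t \<omega>)) \<le> ln ((\<Prod>k\<in>{1..t}. 1 + W (tau k \<omega>)) * m * r^t * (r + c))"
      using np by simp
    also have "\<dots> = (\<Sum>k\<in>{1..t}. g (tau k \<omega>)) + ln m + real t * ln r + ln (r + c)"
    proof -
      have pp: "(\<Prod>k\<in>{1..t}. 1 + W (tau k \<omega>)) > 0" using Wn by (intro prod_pos) (auto simp: add_pos_nonneg)
      have lnm: "ln (x * y) = ln x + ln y" if "x > 0" "y > 0" for x y :: real
        using that by (rule ln_mult_pos)
      have "ln ((\<Prod>k\<in>{1..t}. 1 + W (tau k \<omega>)) * m * r^t * (r + c))
          = ln (\<Prod>k\<in>{1..t}. 1 + W (tau k \<omega>)) + ln m + ln (r^t) + ln (r + c)"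
        using pp m0 r0 a0 by (simp only: lnm mult_pos_pos zero_less_power add_pos_pos)
      also have "ln (\<Prod>k\<in>{1..t}. 1 + W (tau k \<omega>)) = (\<Sum>k\<in>{1..t}. g (tau k \<omega>))"
      proof -
        have nz: "1 + W (tau k \<omega>) \<noteq> 0" for k using Wn[of k] by linarith
        show ?thesis unfolding g_def by (rule ln_prod) (auto simp: nz)
      qed
      also have "ln (r^t) = real t * ln r" using r0 by (simp add: ln_realpow)
      finally show ?thesis .
    qed
    finally have up: "ln (norm1 (Z t \<omega>)) \<le> (\<Sum>k\<in>{1..t}. g (tau k \<omega>)) + real t * ln r + K"
      unfolding K_def by simp
    have "X t \<omega> \<le> ((\<Sum>k\<in>{1..t}. g (tau k \<omega>)) + real t * ln r + K) / real t"
      unfolding X_def using t up by (simp add: divide_right_mono)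
    also have "\<dots> = (\<Sum>k\<in>{1..t}. g (tau k \<omega>)) / real t + ln r + K / real t"
      using t by (simp add: field_simps)
    finally show "X t \<omega> \<le> (\<Sum>k\<in>{1..t}. g (tau k \<omega>)) / real t + ln r + K / real t" .
    have "ln (\<alpha>^t * n0) \<le> ln (norm1 (Z t \<omega>))"
    proof -
      have ge: "\<alpha>^t * n0 \<le> norm1 (Z t \<omega>)" using pb unfolding n0_def Z_def by simp
      have pos: "\<alpha>^t * n0 > 0" using ab n0p by simp
      show ?thesis using pos ge np by simp
    qed
    then have "real t * ln \<alpha> + ln n0 \<le> ln (norm1 (Z t \<omega>))"
      using ab n0p by (simp add: ln_mult ln_realpow)
    then have "(real t * ln \<alpha> + ln n0) / real t \<le> X t \<omega>"
      unfolding X_def using t by (simp add: divide_right_mono)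
    then show "X t \<omega> \<ge> ln \<alpha> + ln n0 / real t"
      using t by (simp add: field_simps)
  qed
  define Bd where "Bd = \<bar>ln \<alpha>\<bar> + \<bar>ln n0\<bar> + \<Gamma> + \<bar>ln r\<bar> + \<bar>K\<bar>"
  have \<Gamma>0: "\<Gamma> \<ge> 0" unfolding \<Gamma>_def using ab by simp
  have Xb: "\<bar>X t \<omega>\<bar> \<le> Bd" if w: "\<omega> \<in> space M" for t \<omega>
  proof (cases "t = 0")
    case True then show ?thesis unfolding X_def Bd_def using \<Gamma>0 by simp
  next
    case False
    then have t: "t \<ge> 1" and tp: "real t \<ge> 1" by auto
    have "(\<Sum>k\<in>{1..t}. g (tau k \<omega>)) \<le> real t * \<Gamma>"
      using sum_mono[of "{1..t}" "\<lambda>k. g (tau k \<omega>)" "\<lambda>_. \<Gamma>"] gb rng w by auto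
    then have s1: "(\<Sum>k\<in>{1..t}. g (tau k \<omega>)) / real t \<le> \<Gamma>" using tp by (simp add: field_simps)
    have dv: "\<bar>y / real t\<bar> \<le> \<bar>y\<bar>" for y
    proof -
      have "\<bar>y\<bar> * 1 \<le> \<bar>y\<bar> * real t" using tp by (intro mult_left_mono) auto
      then show ?thesis using tp by (simp add: abs_divide divide_le_eq)
    qed
    have s2: "K / real t \<le> \<bar>K\<bar>" using dv[of K] by linarith
    have s3: "- \<bar>ln n0\<bar> \<le> ln n0 / real t" using dv[of "ln n0"] by linarith
    show ?thesis using Xup[OF w t] Xlo[OF w t] s1 s2 s3 \<Gamma>0 abs_ge_self[of "ln r"] abs_ge_minus_self[of "ln \<alpha>"]
      unfolding Bd_def abs_le_iff by linarith
  qed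
  have Xm: "X t \<in> borel_measurable M" for t
    unfolding X_def Z_def
    by (rule norm1_meas, rule zproc_meas[OF cI]) (use meas rng in auto)
  have lim: "AE \<omega> in M. (\<lambda>t. X t \<omega>) \<longlonglongrightarrow> logLS"
    using SGR unfolding X_def Z_def A_def .
  have "logLS \<le> ln r + (\<Sum>\<^sub>\<infinity>j\<in>I. pst j * g j)"
    by (rule limit_arg[OF Xm Xb lim gb Xup pst0 pst1 _ rr gsum])
       (use conv0 in auto)
  also have "\<dots> \<le> C_II" unfolding C_II_def g_def W_def A_def using lnr by simp
  finally show ?thesis using part2 by simp
qed


end
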